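(* Let $\mathbb X,\mathbb Y$ be Euclidean spaces, $\Phi\colon\mathbb X\rightrightarrows\mathbb Y$ with closed graph, $(\bar x,\bar y)\in\operatorname{gph}\Phi$ and $u\in\mathbb S_{\mathbb X}$. Each of the following three properties remains equivalent to itself when, in its definition, the requirement $x_k^*\in\widehat D^*\Phi(x_k,y_k)(\lambda_k)$ is replaced by $x_k^*\in D^*\Phi(x_k,y_k)(\lambda_k)$: (a) asymptotic regularity of $\Phi$ at $(\bar x,\bar y)$: for all sequences $(x_k,y_k)\in\operatorname{gph}\Phi$, $x_k^*$, $\lambda_k$ and $x^*$ with $x_k\to\bar x$, $y_k\to\bar y$, $x_k^*\to x^*$ and $x_k^*\in\widehat D^*\Phi(x_k,y_k)(\lambda_k)$ for all $k$, one has $x^*\in\operatorname{Im}D^*\Phi(\bar x,\bar y)$; (b) asymptotic regularity of $\Phi$ at $(\bar x,\bar y)$ in direction $u$: for all sequences $(x_k,y_k)\in\operatorname{gph}\Phi$, $x_k^*\in\mathbb X$, $\lambda_k\in\mathbb Y$ and $x^*\in\mathbb X$, $y^*\in\mathbb Y$ with $x_k\notin\Phi^{-1}(\bar y)$, $y_k\ne\bar y$, $x_k^*\in\widehat D^*\Phi(x_k,y_k)(\lambda_k)$ for all $k$ and the convergences (C): $x_k\to\bar x$, $y_k\to\bar y$, $x_k^*\to x^*$, $\frac{x_k-\bar x}{\|x_k-\bar x\|}\to u$, $\frac{y_k-\bar y}{\|x_k-\bar x\|}\to0$, $\frac{\|y_k-\bar y\|}{\|x_k-\bar x\|}\lambda_k\to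 y^*$, $\|\lambda_k\|\to\infty$, $\frac{y_k-\bar y}{\|y_k-\bar y\|}-\frac{\lambda_k}{\|\lambda_k\|}\to0$, one has $x^*\in\operatorname{Im}D^*\Phi(\bar x,\bar y)$; (c) strong asymptotic regularity of $\Phi$ at $(\bar x,\bar y)$ in direction $u$: the same as (b) but with conclusion $x^*\in\operatorname{Im}D^*\Phi((\bar x,\bar y);(u,0))$.
   Context: $\widehat D^*\Phi(x,y)(y^* )=\{x^*\mid(x^*,-y^* )\in\widehat{\mathcal N}_{\operatorname{gph}\Phi}(x,y)\}$ (regular coderivative), $D^*\Phi(x,y)(y^* )$ likewise with the limiting normal cone $\mathcal N$, and $D^*\Phi((\bar x,\bar y);(u,v))(y^* )=\{x^*\mid(x^*,-y^* )\in\mathcal N_{\operatorname{gph}\Phi}((\bar x,\bar y);(u,v))\}$ with the directional limiting normal cone $\mathcal N_Q(z;w)$ = set of $\eta$ with $w_k\to w$, $t_k\downarrow0$, $\eta_k\to\eta$, $\eta_k\in\widehat{\mathcal N}_Q(z+t_kw_k)$. $\operatorname{Im}\Psi:=\bigcup_{y^*}\Psi(y^* )$. *)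

theory Defs
  imports "HOL-Analysis.Analysis"
begin

definition gph :: "('a \<Rightarrow> 'b set) \<Rightarrow> ('a \<times> 'b) set" where
  "gph \<Phi> = {(x, y). y \<in> \<Phi> x}"

text \<open>Regular (Frechet) normal cone: limsup of inner(eta, z'-z)/norm(z'-z) over z' in Q, z' to z, is at most 0;
  empty outside Q.\<close>
definition reg_normal :: "'e::euclidean_space set \<Rightarrow> 'e \<Rightarrow> 'e set" where
  "reg_normal Q z = {\<eta>. z \<in> Q \<and>
     (\<forall>\<epsilon>>0. \<exists>\<delta>>0. \<forall>z'\<in>Q. norm (z' - z) < \<delta> \<longrightarrow> \<eta> \<bullet> (z' - z) \<le> \<epsilon> * norm (z' - z))}"

definition lim_normal :: "'e::euclidean_space set \<Rightarrow> 'e \<Rightarrow> 'e set" where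
  "lim_normal Q z = {\<eta>. \<exists>zs \<eta>s. (\<forall>k. zs k \<in> Q \<and> \<eta>s k \<in> reg_normal Q (zs k)) \<and>
     zs \<longlonglongrightarrow> z \<and> \<eta>s \<longlonglongrightarrow> \<eta>}"

definition dir_normal :: "'e::euclidean_space set \<Rightarrow> 'e \<Rightarrow> 'e \<Rightarrow> 'e set" where
  "dir_normal Q z w = {\<eta>. \<exists>t ws \<eta>s. (\<forall>k. t k > 0 \<and> \<eta>s k \<in> reg_normal Q (z + t k *\<^sub>R ws k)) \<and>
     t \<longlonglongrightarrow> 0 \<and> ws \<longlonglongrightarrow> w \<and> \<eta>s \<longlonglongrightarrow> \<eta>}"

definition reg_coderiv :: "('a::euclidean_space \<Rightarrow> 'b::euclidean_space set) \<Rightarrow> 'a \<Rightarrow> 'b \<Rightarrow> 'b \<Rightarrow> 'a set" where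
  "reg_coderiv \<Phi> x y ys = {xs. (xs, - ys) \<in> reg_normal (gph \<Phi>) (x, y)}"

definition lim_coderiv :: "('a::euclidean_space \<Rightarrow> 'b::euclidean_space set) \<Rightarrow> 'a \<Rightarrow> 'b \<Rightarrow> 'b \<Rightarrow> 'a set" where
  "lim_coderiv \<Phi> x y ys = {xs. (xs, - ys) \<in> lim_normal (gph \<Phi>) (x, y)}"

definition dir_coderiv :: "('a::euclidean_space \<Rightarrow> 'b::euclidean_space set) \<Rightarrow> 'a \<Rightarrow> 'b \<Rightarrow> 'a \<Rightarrow> 'b \<Rightarrow> 'b \<Rightarrow> 'a set" where
  "dir_coderiv \<Phi> x y u v ys = {xs. (xs, - ys) \<in> dir_normal (gph \<Phi>) (x, y) (u, v)}"

definition Im :: "('b \<Rightarrow> 'a set) \<Rightarrow> 'a set" where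
  "Im \<Psi> = (\<Union>ys. \<Psi> ys)"

definition asym_reg ::
  "(('a::euclidean_space \<Rightarrow> 'b::euclidean_space set) \<Rightarrow> 'a \<Rightarrow> 'b \<Rightarrow> 'b \<Rightarrow> 'a set)
    \<Rightarrow> ('a \<Rightarrow> 'b set) \<Rightarrow> 'a \<Rightarrow> 'b \<Rightarrow> bool" where
  "asym_reg D \<Phi> xb yb \<longleftrightarrow>
    (\<forall>(x::nat \<Rightarrow> 'a) (y::nat \<Rightarrow> 'b) (xs::nat \<Rightarrow> 'a) (lam::nat \<Rightarrow> 'b) (xst::'a).
       (\<forall>k. (x k, y k) \<in> gph \<Phi> \<and> xs k \<in> D \<Phi> (x k) (y k) (lam k)) \<and>
       x \<longlonglongrightarrow> xb \<and> y \<longlonglongrightarrow> yb \<and> xs \<longlonglongrightarrow> xst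
       \<longrightarrow> xst \<in> Im (lim_coderiv \<Phi> xb yb))"

definition dir_seq_hyp ::
  "(('a::euclidean_space \<Rightarrow> 'b::euclidean_space set) \<Rightarrow> 'a \<Rightarrow> 'b \<Rightarrow> 'b \<Rightarrow> 'a set)
    \<Rightarrow> ('a \<Rightarrow> 'b set) \<Rightarrow> 'a \<Rightarrow> 'b \<Rightarrow> 'a
    \<Rightarrow> (nat \<Rightarrow> 'a) \<Rightarrow> (nat \<Rightarrow> 'b) \<Rightarrow> (nat \<Rightarrow> 'a) \<Rightarrow> (nat \<Rightarrow> 'b) \<Rightarrow> 'a \<Rightarrow> 'b \<Rightarrow> bool" where
  "dir_seq_hyp D \<Phi> xb yb u x y xs lam xst yst \<longleftrightarrow>
     (\<forall>k. (x k, y k) \<in> gph \<Phi> \<and> yb \<notin> \<Phi> (x k) \<and> y k \<noteq> yb \<and> xs k \<in> D \<Phi> (x k) (y k) (lam k)) \<and>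
     x \<longlonglongrightarrow> xb \<and> y \<longlonglongrightarrow> yb \<and> xs \<longlonglongrightarrow> xst \<and>
     (\<lambda>k. (1 / norm (x k - xb)) *\<^sub>R (x k - xb)) \<longlonglongrightarrow> u \<and>
     (\<lambda>k. (1 / norm (x k - xb)) *\<^sub>R (y k - yb)) \<longlonglongrightarrow> 0 \<and>
     (\<lambda>k. (norm (y k - yb) / norm (x k - xb)) *\<^sub>R lam k) \<longlonglongrightarrow> yst \<and>
     filterlim (\<lambda>k. norm (lam k)) at_top sequentially \<and>
     (\<lambda>k. (1 / norm (y k - yb)) *\<^sub>R (y k - yb) - (1 / norm (lam k)) *\<^sub>R lam k) \<longlonglongrightarrow> 0"

definition asym_reg_dir ::
  "(('a::euclidean_space \<Rightarrow> 'b::euclidean_space set) \<Rightarrow> 'a \<Rightarrow> 'b \<Rightarrow> 'b \<Rightarrow> 'a set)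
    \<Rightarrow> ('a \<Rightarrow> 'b set) \<Rightarrow> 'a \<Rightarrow> 'b \<Rightarrow> 'a \<Rightarrow> bool" where
  "asym_reg_dir D \<Phi> xb yb u \<longleftrightarrow>
    (\<forall>x y xs lam xst yst. dir_seq_hyp D \<Phi> xb yb u x y xs lam xst yst
       \<longrightarrow> xst \<in> Im (lim_coderiv \<Phi> xb yb))"

definition strong_asym_reg_dir ::
  "(('a::euclidean_space \<Rightarrow> 'b::euclidean_space set) \<Rightarrow> 'a \<Rightarrow> 'b \<Rightarrow> 'b \<Rightarrow> 'a set)
    \<Rightarrow> ('a \<Rightarrow> 'b set) \<Rightarrow> 'a \<Rightarrow> 'b \<Rightarrow> 'a \<Rightarrow> bool" where
  "strong_asym_reg_dir D \<Phi> xb yb u \<longleftrightarrow>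
    (\<forall>x y xs lam xst yst. dir_seq_hyp D \<Phi> xb yb u x y xs lam xst yst
       \<longrightarrow> xst \<in> Im (dir_coderiv \<Phi> xb yb u 0))"

end

theory Submission
  imports Defs
begin

lemma cont_ev:
  assumes "isCont g p" "e > 0"
  shows "eventually (\<lambda>w. dist (g w) (g p) < e) (nhds p)"
proof -
  have "eventually (\<lambda>w. dist (g w) (g p) < e) (at p)"
    using assms unfolding isCont_def by (rule tendstoD)
  thus ?thesis using assms(2) by (simp add: eventually_nhds_conv_at)
qed

lemma transfer_lim:
  fixes a b :: "nat \<Rightarrow> 'v::real_normed_vector"
  assumes "eventually (\<lambda>k. dist (a k) (b k) < 1 / real (Suc k)) sequentially" "b \<longlonglongrightarrow> L"
  shows "a \<longlonglongrightarrow> L"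
proof -
  have "(\<lambda>k. a k - b k) \<longlonglongrightarrow> 0"
  proof (rule Lim_transform_bound[where g="\<lambda>k. 1 / real (Suc k)"])
    show "eventually (\<lambda>k. norm (a k - b k) \<le> norm (1 / real (Suc k))) sequentially"
      using assms(1) by eventually_elim (simp add: dist_norm)
    show "(\<lambda>k. 1 / real (Suc k)) \<longlonglongrightarrow> 0" using LIMSEQ_inverse_real_of_nat
      by (simp add: inverse_eq_divide)
  qed
  thus ?thesis using Lim_transform assms(2) by blast
qed

lemma approx:
  assumes "\<forall>k. \<eta> k \<in> lim_normal Q (z k)" and "\<forall>k. eventually (P k) (nhds (z k, \<eta> k))"
  shows "\<exists>zs \<eta>s. \<forall>k. \<eta>s k \<in> reg_normal Q (zs k) \<and> P k (zs k, \<eta>s k)"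
proof -
  have "\<forall>k. \<exists>w. snd w \<in> reg_normal Q (fst w) \<and> P k w"
  proof
    fix k
    from assms(1) obtain zs \<eta>s where h: "\<forall>j. zs j \<in> Q \<and> \<eta>s j \<in> reg_normal Q (zs j)"
      "zs \<longlonglongrightarrow> z k" "\<eta>s \<longlonglongrightarrow> \<eta> k" unfolding lim_normal_def by blast
    have "(\<lambda>j. (zs j, \<eta>s j)) \<longlonglongrightarrow> (z k, \<eta> k)" using h by (intro tendsto_Pair)
    hence "eventually (\<lambda>j. P k (zs j, \<eta>s j)) sequentially" using assms(2)
      unfolding filterlim_iff by blast
    then obtain j where "P k (zs j, \<eta>s j)" unfolding eventually_sequentially by auto
    thus "\<exists>w. snd w \<in> reg_normal Q (fst w) \<and> P k w" using h(1)
      by (intro exI[of _ "(zs j, \<eta>s j)"]) auto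
  qed
  then obtain f where "\<forall>k. snd (f k) \<in> reg_normal Q (fst (f k)) \<and> P k (f k)" by metis
  thus ?thesis by (intro exI[of _ "\<lambda>k. fst (f k)"] exI[of _ "\<lambda>k. snd (f k)"]) auto
qed

lemma reg_sub_lim: "reg_coderiv \<Phi> x y l \<subseteq> lim_coderiv \<Phi> x y l"
  unfolding reg_coderiv_def lim_coderiv_def lim_normal_def
proof clarify
  fix xs assume h: "(xs, - l) \<in> reg_normal (gph \<Phi>) (x, y)"
  hence "(x, y) \<in> gph \<Phi>" unfolding reg_normal_def by auto
  thus "\<exists>zs \<eta>s. (\<forall>k. zs k \<in> gph \<Phi> \<and> \<eta>s k \<in> reg_normal (gph \<Phi>) (zs k)) \<and>
          zs \<longlonglongrightarrow> (x, y) \<and> \<eta>s \<longlonglongrightarrow> (xs, - l)"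
    using h by (intro exI[of _ "\<lambda>k. (x, y)"] exI[of _ "\<lambda>k. (xs, - l)"]) auto
qed


lemma lift_a:
  assumes "\<forall>k. (x k, y k) \<in> gph \<Phi> \<and> xs k \<in> lim_coderiv \<Phi> (x k) (y k) (lam k)"
    "x \<longlonglongrightarrow> xb" "y \<longlonglongrightarrow> yb" "xs \<longlonglongrightarrow> xst"
  shows "\<exists>x' y' xs' lam'. (\<forall>k. (x' k, y' k) \<in> gph \<Phi> \<and> xs' k \<in> reg_coderiv \<Phi> (x' k) (y' k) (lam' k)) \<and>
       x' \<longlonglongrightarrow> xb \<and> y' \<longlonglongrightarrow> yb \<and> xs' \<longlonglongrightarrow> xst"
proof -
  define p where "p k = ((x k, y k), (xs k, - lam k))" for k
  have "\<exists>zs \<eta>s. \<forall>k. \<eta>s k \<in> reg_normal (gph \<Phi>) (zs k) \<and>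
     (\<lambda>w. dist w (p k) < 1 / real (Suc k)) (zs k, \<eta>s k)"
  proof (rule approx)
    show "\<forall>k. (xs k, - lam k) \<in> lim_normal (gph \<Phi>) (x k, y k)"
      using assms(1) unfolding lim_coderiv_def by auto
    show "\<forall>k. eventually (\<lambda>w. dist w (p k) < 1 / real (Suc k)) (nhds ((x k, y k), (xs k, - lam k)))"
      unfolding p_def eventually_nhds_metric by (auto intro!: exI[of _ "1 / real (Suc _)"])
  qed
  then obtain zs \<eta>s where h: "\<forall>k. \<eta>s k \<in> reg_normal (gph \<Phi>) (zs k) \<and> dist (zs k, \<eta>s k) (p k) < 1 / real (Suc k)"
    by blast
  define x' where "x' k = fst (zs k)" for k
  define y' where "y' k = snd (zs k)" for k
  define xs' where "xs' k = fst (\<eta>s k)" for k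
  define lam' where "lam' k = - snd (\<eta>s k)" for k
  have d: "dist (x' k) (x k) < 1 / real (Suc k) \<and> dist (y' k) (y k) < 1 / real (Suc k)
      \<and> dist (xs' k) (xs k) < 1 / real (Suc k)" for k
  proof -
    have a: "dist (zs k, \<eta>s k) (p k) < 1 / real (Suc k)" using h by blast
    have "dist (x' k) (x k) \<le> dist (zs k, \<eta>s k) (p k)"
      using dist_fst_le[of "zs k" "(x k, y k)"] dist_fst_le[of "(zs k, \<eta>s k)" "p k"]
      unfolding x'_def p_def by auto
    moreover have "dist (y' k) (y k) \<le> dist (zs k, \<eta>s k) (p k)"
      using dist_snd_le[of "zs k" "(x k, y k)"] dist_fst_le[of "(zs k, \<eta>s k)" "p k"]
      unfolding y'_def p_def by auto
    moreover have "dist (xs' k) (xs k) \<le> dist (zs k, \<eta>s k) (p k)"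
      using dist_fst_le[of "\<eta>s k" "(xs k, - lam k)"] dist_snd_le[of "(zs k, \<eta>s k)" "p k"]
      unfolding xs'_def p_def by auto
    ultimately show ?thesis using a by linarith
  qed
  have "\<forall>k. (x' k, y' k) \<in> gph \<Phi> \<and> xs' k \<in> reg_coderiv \<Phi> (x' k) (y' k) (lam' k)"
  proof
    fix k
    have "\<eta>s k \<in> reg_normal (gph \<Phi>) (zs k)" using h by blast
    thus "(x' k, y' k) \<in> gph \<Phi> \<and> xs' k \<in> reg_coderiv \<Phi> (x' k) (y' k) (lam' k)"
      unfolding x'_def y'_def xs'_def lam'_def reg_coderiv_def reg_normal_def by auto
  qed
  moreover have "x' \<longlonglongrightarrow> xb" by (rule transfer_lim[OF _ assms(2)], rule always_eventually) (use d in blast)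
  moreover have "y' \<longlonglongrightarrow> yb" by (rule transfer_lim[OF _ assms(3)], rule always_eventually) (use d in blast)
  moreover have "xs' \<longlonglongrightarrow> xst" by (rule transfer_lim[OF _ assms(4)], rule always_eventually) (use d in blast)
  ultimately show ?thesis by blast
qed


lemma open_notin:
  fixes \<Phi> :: "'a::euclidean_space \<Rightarrow> 'b::euclidean_space set"
  assumes "closed (gph \<Phi>)"
  shows "open {w::('a\<times>'b)\<times>('a\<times>'b). (fst (fst w), yb) \<notin> gph \<Phi>}"
proof -
  have "closed ((\<lambda>w::('a\<times>'b)\<times>('a\<times>'b). (fst (fst w), yb)) -` gph \<Phi>)"
    using assms by (intro closed_vimage) (auto intro!: continuous_intros)
  hence "open (- ((\<lambda>w::('a\<times>'b)\<times>('a\<times>'b). (fst (fst w), yb)) -` gph \<Phi>))"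
    by (rule open_Compl)
  moreover have "- ((\<lambda>w::('a\<times>'b)\<times>('a\<times>'b). (fst (fst w), yb)) -` gph \<Phi>) =
     {w. (fst (fst w), yb) \<notin> gph \<Phi>}" by auto
  ultimately show ?thesis by simp
qed

lemma lift_b:
  fixes \<Phi> :: "'a::euclidean_space \<Rightarrow> 'b::euclidean_space set"
  assumes cl: "closed (gph \<Phi>)" and bb: "(xb, yb) \<in> gph \<Phi>"
    and hyp: "dir_seq_hyp lim_coderiv \<Phi> xb yb u x y xs lam xst yst"
  shows "\<exists>x' y' xs' lam'. dir_seq_hyp reg_coderiv \<Phi> xb yb u x' y' xs' lam' xst yst"
proof -
  note H = hyp[unfolded dir_seq_hyp_def]
  define p where "p k = ((x k, y k), (xs k, - lam k))" for k
  define e where "e k = 1 / real (Suc k)" for k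
  define g1 where "g1 w = (1 / norm (fst (fst w) - xb)) *\<^sub>R (fst (fst w) - xb)" for w :: "('a\<times>'b)\<times>('a\<times>'b)"
  define g2 where "g2 w = (1 / norm (fst (fst w) - xb)) *\<^sub>R (snd (fst w) - yb)" for w :: "('a\<times>'b)\<times>('a\<times>'b)"
  define g3 where "g3 w = (norm (snd (fst w) - yb) / norm (fst (fst w) - xb)) *\<^sub>R (- snd (snd w))" for w :: "('a\<times>'b)\<times>('a\<times>'b)"
  define g4 where "g4 w = (1 / norm (snd (fst w) - yb)) *\<^sub>R (snd (fst w) - yb) - (1 / norm (- snd (snd w))) *\<^sub>R (- snd (snd w))" for w :: "('a\<times>'b)\<times>('a\<times>'b)"
  define P where "P k w = (dist w (p k) < e k \<and> (fst (fst w), yb) \<notin> gph \<Phi> \<and> snd (fst w) \<noteq> yb \<and>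
     (lam k \<noteq> 0 \<longrightarrow> dist (g1 w) (g1 (p k)) < e k \<and> dist (g2 w) (g2 (p k)) < e k \<and>
        dist (g3 w) (g3 (p k)) < e k \<and> dist (g4 w) (g4 (p k)) < e k))" for k w
  have epos: "e k > 0" for k unfolding e_def by simp
  have xne: "x k \<noteq> xb" for k using H bb unfolding gph_def by auto
  have yne: "y k \<noteq> yb" for k using H by auto
  have "\<exists>zs \<eta>s. \<forall>k. \<eta>s k \<in> reg_normal (gph \<Phi>) (zs k) \<and> P k (zs k, \<eta>s k)"
  proof (rule approx)
    show "\<forall>k. (xs k, - lam k) \<in> lim_normal (gph \<Phi>) (x k, y k)"
      using H unfolding lim_coderiv_def by auto
    show "\<forall>k. eventually (P k) (nhds ((x k, y k), (xs k, - lam k)))"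
    proof
      fix k
      have pk: "((x k, y k), (xs k, - lam k)) = p k" unfolding p_def ..
      have E1: "eventually (\<lambda>w. dist w (p k) < e k) (nhds (p k))"
        unfolding eventually_nhds_metric using epos by blast
      have E2: "eventually (\<lambda>w. (fst (fst w), yb) \<notin> gph \<Phi>) (nhds (p k))"
        using eventually_nhds_in_open[OF open_notin[OF cl, of yb], of "p k"] H
        unfolding p_def gph_def by auto
      have E3: "eventually (\<lambda>w. snd (fst w) \<noteq> yb) (nhds (p k))"
      proof -
        have "open {w::('a\<times>'b)\<times>('a\<times>'b). snd (fst w) \<noteq> yb}"
          by (rule open_Collect_neq) (auto intro!: continuous_intros)
        from eventually_nhds_in_open[OF this, of "p k"] show ?thesis using yne unfolding p_def by auto
      qed
      have E4: "eventually (\<lambda>w. lam k \<noteq> 0 \<longrightarrow> dist (g1 w) (g1 (p k)) < e k \<and> dist (g2 w) (g2 (p k)) < e k \<and>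
        dist (g3 w) (g3 (p k)) < e k \<and> dist (g4 w) (g4 (p k)) < e k) (nhds (p k))"
      proof (cases "lam k = 0")
        case True thus ?thesis by simp
      next
        case False
        have c: "isCont g1 (p k)" "isCont g2 (p k)" "isCont g3 (p k)" "isCont g4 (p k)"
          unfolding g1_def g2_def g3_def g4_def p_def using xne yne False
          by (auto intro!: continuous_intros)
        show ?thesis using cont_ev[OF c(1) epos] cont_ev[OF c(2) epos] cont_ev[OF c(3) epos] cont_ev[OF c(4) epos]
          by eventually_elim auto
      qed
      show "eventually (P k) (nhds ((x k, y k), (xs k, - lam k)))"
        unfolding pk P_def using E1 E2 E3 E4 by eventually_elim auto
    qed
  qed
  then obtain zs \<eta>s where h: "\<forall>k. \<eta>s k \<in> reg_normal (gph \<Phi>) (zs k) \<and> P k (zs k, \<eta>s k)"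
    by blast
  define x' where "x' k = fst (zs k)" for k
  define y' where "y' k = snd (zs k)" for k
  define xs' where "xs' k = fst (\<eta>s k)" for k
  define lam' where "lam' k = - snd (\<eta>s k)" for k
  have zsk: "(zs k, \<eta>s k) = ((x' k, y' k), (xs' k, - lam' k))" for k
    unfolding x'_def y'_def xs'_def lam'_def by simp
  have hP: "P k ((x' k, y' k), (xs' k, - lam' k))" for k using h zsk by metis
  have d: "dist (x' k) (x k) < e k \<and> dist (y' k) (y k) < e k
      \<and> dist (xs' k) (xs k) < e k \<and> dist (lam' k) (lam k) < e k" for k
  proof -
    have a: "dist ((x' k, y' k), (xs' k, - lam' k)) (p k) < e k" using hP[of k] unfolding P_def by blast
    have "dist (x' k) (x k) \<le> dist ((x' k, y' k), (xs' k, - lam' k)) (p k)"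
      using dist_fst_le[of "(x' k, y' k)" "(x k, y k)"] dist_fst_le[of "((x' k, y' k), (xs' k, - lam' k))" "p k"]
      unfolding p_def by auto
    moreover have "dist (y' k) (y k) \<le> dist ((x' k, y' k), (xs' k, - lam' k)) (p k)"
      using dist_snd_le[of "(x' k, y' k)" "(x k, y k)"] dist_fst_le[of "((x' k, y' k), (xs' k, - lam' k))" "p k"]
      unfolding p_def by auto
    moreover have "dist (xs' k) (xs k) \<le> dist ((x' k, y' k), (xs' k, - lam' k)) (p k)"
      using dist_fst_le[of "(xs' k, - lam' k)" "(xs k, - lam k)"] dist_snd_le[of "((x' k, y' k), (xs' k, - lam' k))" "p k"]
      unfolding p_def by auto
    moreover have "dist (lam' k) (lam k) \<le> dist ((x' k, y' k), (xs' k, - lam' k)) (p k)"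
      using dist_snd_le[of "(xs' k, - lam' k)" "(xs k, - lam k)"] dist_snd_le[of "((x' k, y' k), (xs' k, - lam' k))" "p k"]
      unfolding p_def by (auto simp: dist_minus)
    ultimately show ?thesis using a by linarith
  qed
  have ev_lam: "eventually (\<lambda>k. lam k \<noteq> 0) sequentially"
  proof -
    have "eventually (\<lambda>k. 1 \<le> norm (lam k)) sequentially"
      using H unfolding filterlim_at_top by blast
    thus ?thesis by eventually_elim auto
  qed
  have G: "eventually (\<lambda>k. dist (g1 ((x' k, y' k), (xs' k, - lam' k))) (g1 (p k)) < e k \<and>
      dist (g2 ((x' k, y' k), (xs' k, - lam' k))) (g2 (p k)) < e k \<and>
      dist (g3 ((x' k, y' k), (xs' k, - lam' k))) (g3 (p k)) < e k \<and>
      dist (g4 ((x' k, y' k), (xs' k, - lam' k))) (g4 (p k)) < e k) sequentially"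
    using ev_lam by eventually_elim (use hP in \<open>auto simp: P_def\<close>)
  have "dir_seq_hyp reg_coderiv \<Phi> xb yb u x' y' xs' lam' xst yst"
    unfolding dir_seq_hyp_def
  proof (intro conjI)
    show "\<forall>k. (x' k, y' k) \<in> gph \<Phi> \<and> yb \<notin> \<Phi> (x' k) \<and> y' k \<noteq> yb \<and> xs' k \<in> reg_coderiv \<Phi> (x' k) (y' k) (lam' k)"
    proof
      fix k
      have "\<eta>s k \<in> reg_normal (gph \<Phi>) (zs k)" using h by blast
      hence "(xs' k, - lam' k) \<in> reg_normal (gph \<Phi>) (x' k, y' k)" unfolding x'_def y'_def xs'_def lam'_def by simp
      moreover have "(x' k, yb) \<notin> gph \<Phi> \<and> y' k \<noteq> yb" using hP[of k] unfolding P_def by simp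
      ultimately show "(x' k, y' k) \<in> gph \<Phi> \<and> yb \<notin> \<Phi> (x' k) \<and> y' k \<noteq> yb \<and> xs' k \<in> reg_coderiv \<Phi> (x' k) (y' k) (lam' k)"
        unfolding reg_coderiv_def reg_normal_def gph_def by auto
    qed
    show "x' \<longlonglongrightarrow> xb" unfolding e_def[symmetric]
      by (rule transfer_lim[OF _ conjunct1[OF conjunct2[OF H]]], rule always_eventually) (use d in \<open>simp add: e_def\<close>)
    show "y' \<longlonglongrightarrow> yb" 
      by (rule transfer_lim[OF _ conjunct1[OF conjunct2[OF conjunct2[OF H]]]], rule always_eventually) (use d in \<open>simp add: e_def\<close>)
    show "xs' \<longlonglongrightarrow> xst" 
      by (rule transfer_lim[OF _ conjunct1[OF conjunct2[OF conjunct2[OF conjunct2[OF H]]]]], rule always_eventually) (use d in \<open>simp add: e_def\<close>)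
    show "(\<lambda>k. (1 / norm (x' k - xb)) *\<^sub>R (x' k - xb)) \<longlonglongrightarrow> u"
    proof (rule transfer_lim)
      show "(\<lambda>k. g1 (p k)) \<longlonglongrightarrow> u" using H unfolding g1_def p_def by simp
      show "eventually (\<lambda>k. dist ((1 / norm (x' k - xb)) *\<^sub>R (x' k - xb)) (g1 (p k)) < 1 / real (Suc k)) sequentially"
        using G by eventually_elim (simp add: g1_def e_def)
    qed
    show "(\<lambda>k. (1 / norm (x' k - xb)) *\<^sub>R (y' k - yb)) \<longlonglongrightarrow> 0"
    proof (rule transfer_lim)
      show "(\<lambda>k. g2 (p k)) \<longlonglongrightarrow> 0" using H unfolding g2_def p_def by simp
      show "eventually (\<lambda>k. dist ((1 / norm (x' k - xb)) *\<^sub>R (y' k - yb)) (g2 (p k)) < 1 / real (Suc k)) sequentially"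
        using G by eventually_elim (simp add: g2_def e_def)
    qed
    show "(\<lambda>k. (norm (y' k - yb) / norm (x' k - xb)) *\<^sub>R lam' k) \<longlonglongrightarrow> yst"
    proof (rule transfer_lim)
      show "(\<lambda>k. g3 (p k)) \<longlonglongrightarrow> yst" using H unfolding g3_def p_def by simp
      show "eventually (\<lambda>k. dist ((norm (y' k - yb) / norm (x' k - xb)) *\<^sub>R lam' k) (g3 (p k)) < 1 / real (Suc k)) sequentially"
        using G by eventually_elim (simp add: g3_def e_def)
    qed
    show "(\<lambda>k. (1 / norm (y' k - yb)) *\<^sub>R (y' k - yb) - (1 / norm (lam' k)) *\<^sub>R lam' k) \<longlonglongrightarrow> 0"
    proof (rule transfer_lim)
      show "(\<lambda>k. g4 (p k)) \<longlonglongrightarrow> 0" using H unfolding g4_def p_def by simp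
      show "eventually (\<lambda>k. dist ((1 / norm (y' k - yb)) *\<^sub>R (y' k - yb) - (1 / norm (lam' k)) *\<^sub>R lam' k) (g4 (p k)) < 1 / real (Suc k)) sequentially"
        using G by eventually_elim (simp add: g4_def e_def)
    qed
    show "filterlim (\<lambda>k. norm (lam' k)) at_top sequentially"
      unfolding filterlim_at_top
    proof
      fix Z :: real
      have "eventually (\<lambda>k. Z + 1 \<le> norm (lam k)) sequentially"
        using H unfolding filterlim_at_top by blast
      thus "eventually (\<lambda>k. Z \<le> norm (lam' k)) sequentially"
      proof eventually_elim
        case (elim k)
        have "e k \<le> 1" unfolding e_def by simp
        hence "dist (lam' k) (lam k) < 1" using d[of k] by linarith
        hence "norm (lam k) - norm (lam' k) < 1"
          using norm_triangle_ineq2[of "lam k" "lam' k"] by (simp add: dist_norm norm_minus_commute)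
        thus ?case using elim by linarith
      qed
    qed
  qed
  thus ?thesis by blast
qed


lemma dir_hyp_mono:
  "dir_seq_hyp reg_coderiv \<Phi> xb yb u x y xs lam xst yst \<Longrightarrow> dir_seq_hyp lim_coderiv \<Phi> xb yb u x y xs lam xst yst"
  unfolding dir_seq_hyp_def using reg_sub_lim by blast

theorem proposition5p2:
  fixes \<Phi> :: "'a::euclidean_space \<Rightarrow> 'b::euclidean_space set"
    and xb :: 'a and yb :: 'b and u :: 'a
  assumes "closed (gph \<Phi>)"
    and "(xb, yb) \<in> gph \<Phi>"
    and "norm u = 1"
  shows "(asym_reg reg_coderiv \<Phi> xb yb \<longleftrightarrow> asym_reg lim_coderiv \<Phi> xb yb)
       \<and> (asym_reg_dir reg_coderiv \<Phi> xb yb u \<longleftrightarrow> asym_reg_dir lim_coderiv \<Phi> xb yb u)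
       \<and> (strong_asym_reg_dir reg_coderiv \<Phi> xb yb u \<longleftrightarrow> strong_asym_reg_dir lim_coderiv \<Phi> xb yb u)"
proof (intro conjI iffI)
  assume A: "asym_reg reg_coderiv \<Phi> xb yb"
  show "asym_reg lim_coderiv \<Phi> xb yb" unfolding asym_reg_def
  proof (intro allI impI)
    fix x y xs lam xst
    assume "(\<forall>k. (x k, y k) \<in> gph \<Phi> \<and> xs k \<in> lim_coderiv \<Phi> (x k) (y k) (lam k)) \<and>
       x \<longlonglongrightarrow> xb \<and> y \<longlonglongrightarrow> yb \<and> xs \<longlonglongrightarrow> xst"
    then obtain x' y' xs' lam' where "(\<forall>k. (x' k, y' k) \<in> gph \<Phi> \<and> xs' k \<in> reg_coderiv \<Phi> (x' k) (y' k) (lam' k)) \<and>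
       x' \<longlonglongrightarrow> xb \<and> y' \<longlonglongrightarrow> yb \<and> xs' \<longlonglongrightarrow> xst" using lift_a by metis
    thus "xst \<in> Im (lim_coderiv \<Phi> xb yb)" using A unfolding asym_reg_def by blast
  qed
next
  assume A: "asym_reg lim_coderiv \<Phi> xb yb"
  show "asym_reg reg_coderiv \<Phi> xb yb" using A reg_sub_lim unfolding asym_reg_def by blast
next
  assume A: "asym_reg_dir reg_coderiv \<Phi> xb yb u"
  show "asym_reg_dir lim_coderiv \<Phi> xb yb u" unfolding asym_reg_dir_def
  proof (intro allI impI)
    fix x y xs lam xst yst
    assume "dir_seq_hyp lim_coderiv \<Phi> xb yb u x y xs lam xst yst"
    then obtain x' y' xs' lam' where "dir_seq_hyp reg_coderiv \<Phi> xb yb u x' y' xs' lam' xst yst"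
      using lift_b[OF assms(1,2)] by metis
    thus "xst \<in> Im (lim_coderiv \<Phi> xb yb)" using A unfolding asym_reg_dir_def by blast
  qed
next
  assume A: "asym_reg_dir lim_coderiv \<Phi> xb yb u"
  show "asym_reg_dir reg_coderiv \<Phi> xb yb u" using A dir_hyp_mono unfolding asym_reg_dir_def by blast
next
  assume A: "strong_asym_reg_dir reg_coderiv \<Phi> xb yb u"
  show "strong_asym_reg_dir lim_coderiv \<Phi> xb yb u" unfolding strong_asym_reg_dir_def
  proof (intro allI impI)
    fix x y xs lam xst yst
    assume "dir_seq_hyp lim_coderiv \<Phi> xb yb u x y xs lam xst yst"
    then obtain x' y' xs' lam' where "dir_seq_hyp reg_coderiv \<Phi> xb yb u x' y' xs' lam' xst yst"
      using lift_b[OF assms(1,2)] by metis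
    thus "xst \<in> Im (dir_coderiv \<Phi> xb yb u 0)" using A unfolding strong_asym_reg_dir_def by blast
  qed
next
  assume A: "strong_asym_reg_dir lim_coderiv \<Phi> xb yb u"
  show "strong_asym_reg_dir reg_coderiv \<Phi> xb yb u" using A dir_hyp_mono unfolding strong_asym_reg_dir_def by blast
qed

end
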